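(* For any integers $m,n\geqslant 1$ and $N\geqslant 1$, the endomorphism $\mathscr{A}_{m,n}=\sum_{1\leqslant a\leqslant m,\,1\leqslant b'\leqslant n}\tau_{ab'}$ of $V^{m,n}$ satisfies: (1) $\mathscr{A}_{m,n}$ is diagonalisable; (2) $\ker\mathscr{A}_{m,n}=V^{m,n}_0$ and $\operatorname{Im}\mathscr{A}_{m,n}=V^{m,n}_1$, so that $V^{m,n}=V^{m,n}_0\oplus V^{m,n}_1$; (3) all eigenvalues of $\mathscr{A}_{m,n}$ are real and non-negative.
   Context: $V$ is a complex vector space of dimension $N$ with basis $\{e_i\}$ and dual basis $\{e^i\}$ of $V^*$; $V^{m,n}=V^{\otimes m}\otimes V^{*\otimes n}$. For $1\leqslant a\leqslant m$, $1\leqslant b'\leqslant n$, $\mathrm{tr}_{ab'}:V^{m,n}\to V^{m-1,n-1}$ contracts the $a$-th factor $V$ with the $b'$-th factor $V^*$ (i.e. multiplies by $\langle\varphi_{b'},v_a\rangle$ and deletes both factors), and $\mathrm{tr}^+_{ab'}:V^{m-1,n-1}\to V^{m,n}$ inserts $\sum_{i=1}^N e_i\otimes e^i$ with $e_i$ in the $a$-th $V$-position and $e^i$ in the $b'$-th $V^*$-position. $\tau_{ab'}=\mathrm{tr}^+_{ab'}\circ\mathrm{tr}_{ab'}$. The traceless subspace is $V^{m,n}_0=\bigcap_{a,b'}\ker\mathrm{tr}_{ab'}$, and $V^{m,n}_1$ is the span of the images of all $\mathrm{tr}^+_{ab'}$. *)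

theory Defs
  imports Complex_Main
begin

text \<open>A tensor in V^{m,n}, V = C^N with basis e_0..e_{N-1}, is represented by its
components T(I;J) = coefficient of e_{I_1} \<otimes> ... \<otimes> e_{I_m} \<otimes> e^{J_1} \<otimes> ... \<otimes> e^{J_n},
where I, J are lists of indices.\<close>

type_synonym tensor = "nat list \<Rightarrow> nat list \<Rightarrow> complex"

definition valid_idx :: "nat \<Rightarrow> nat \<Rightarrow> nat \<Rightarrow> nat list \<Rightarrow> nat list \<Rightarrow> bool" where
  "valid_idx N m n I J \<longleftrightarrow> length I = m \<and> set I \<subseteq> {..<N} \<and> length J = n \<and> set J \<subseteq> {..<N}"

definition tens :: "nat \<Rightarrow> nat \<Rightarrow> nat \<Rightarrow> tensor set" where
  "tens N m n = {T. \<forall>I J. \<not> valid_idx N m n I J \<longrightarrow> T I J = 0}"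

definition ins_at :: "nat \<Rightarrow> nat \<Rightarrow> nat list \<Rightarrow> nat list" where
  "ins_at i k xs = take i xs @ k # drop i xs"

definition del_at :: "nat \<Rightarrow> nat list \<Rightarrow> nat list" where
  "del_at i xs = take i xs @ drop (Suc i) xs"

text \<open>tr_{ab'} : V^{m,n} \<rightarrow> V^{m-1,n-1}, positions a, b counted from 1\<close>
definition tr :: "nat \<Rightarrow> nat \<Rightarrow> nat \<Rightarrow> nat \<Rightarrow> nat \<Rightarrow> tensor \<Rightarrow> tensor" where
  "tr N m n a b T = (\<lambda>I J. if valid_idx N (m - 1) (n - 1) I J
      then (\<Sum>k<N. T (ins_at (a - 1) k I) (ins_at (b - 1) k J)) else 0)"

text \<open>tr^+_{ab'} : V^{m-1,n-1} \<rightarrow> V^{m,n}, inserting \<Sum>_i e_i \<otimes> e^i\<close>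
definition trp :: "nat \<Rightarrow> nat \<Rightarrow> nat \<Rightarrow> nat \<Rightarrow> nat \<Rightarrow> tensor \<Rightarrow> tensor" where
  "trp N m n a b S = (\<lambda>I J. if valid_idx N m n I J \<and> I ! (a - 1) = J ! (b - 1)
      then S (del_at (a - 1) I) (del_at (b - 1) J) else 0)"

definition tau :: "nat \<Rightarrow> nat \<Rightarrow> nat \<Rightarrow> nat \<Rightarrow> nat \<Rightarrow> tensor \<Rightarrow> tensor" where
  "tau N m n a b = trp N m n a b \<circ> tr N m n a b"

definition opA :: "nat \<Rightarrow> nat \<Rightarrow> nat \<Rightarrow> tensor \<Rightarrow> tensor" where
  "opA N m n T = (\<lambda>I J. \<Sum>a\<in>{1..m}. \<Sum>b\<in>{1..n}. tau N m n a b T I J)"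

definition V0 :: "nat \<Rightarrow> nat \<Rightarrow> nat \<Rightarrow> tensor set" where
  "V0 N m n = {T \<in> tens N m n. \<forall>a\<in>{1..m}. \<forall>b\<in>{1..n}. tr N m n a b T = (\<lambda>I J. 0)}"

text \<open>V_1^{m,n}: the span (= sum) of the images of all tr^+_{ab'}\<close>
definition V1 :: "nat \<Rightarrow> nat \<Rightarrow> nat \<Rightarrow> tensor set" where
  "V1 N m n = {T. \<exists>S. (\<forall>a\<in>{1..m}. \<forall>b\<in>{1..n}. S a b \<in> tens N (m - 1) (n - 1)) \<and>
      T = (\<lambda>I J. \<Sum>a\<in>{1..m}. \<Sum>b\<in>{1..n}. trp N m n a b (S a b) I J)}"

text \<open>An endomorphism f of the subspace W is diagonalisable if W is spanned by
finitely many eigenvectors of f (hence has an eigenbasis).\<close>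
definition diagonalisable_on :: "tensor set \<Rightarrow> (tensor \<Rightarrow> tensor) \<Rightarrow> bool" where
  "diagonalisable_on W f \<longleftrightarrow> (\<exists>K::nat. \<exists>v :: nat \<Rightarrow> tensor. \<exists>l :: nat \<Rightarrow> complex.
      (\<forall>k<K. v k \<in> W \<and> v k \<noteq> (\<lambda>I J. 0) \<and> f (v k) = (\<lambda>I J. l k * v k I J)) \<and>
      (\<forall>T\<in>W. \<exists>c :: nat \<Rightarrow> complex. T = (\<lambda>I J. \<Sum>k<K. c k * v k I J)))"

end

theory Submission
  imports Defs "Jordan_Normal_Form.Jordan_Normal_Form_Existence"
begin

lemma jordan_matrix_Cons:
  "jordan_matrix ((n,a) # rest) = four_block_mat (jordan_block n a) (0\<^sub>m n (sum_list (map fst rest)))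
     (0\<^sub>m (sum_list (map fst rest)) n) (jordan_matrix rest)"
  using jordan_matrix_carrier[of rest] unfolding jordan_matrix_def by (simp add: Let_def)

lemma jordan_matrix_entries:
  fixes n_as :: "(nat \<times> 'a::{zero,one}) list"
  assumes "i < sum_list (map fst n_as)" "j < sum_list (map fst n_as)"
  shows "(j \<noteq> i \<and> j \<noteq> Suc i \<longrightarrow> jordan_matrix n_as $$ (i,j) = 0) \<and>
         (j = Suc i \<longrightarrow> jordan_matrix n_as $$ (i,j) = 0 \<or>
            (jordan_matrix n_as $$ (i,j) = 1 \<and> jordan_matrix n_as $$ (i,i) = jordan_matrix n_as $$ (j,j)))"
  using assms
proof (induction n_as arbitrary: i j)
  case Nil
  then show ?case by simp
next
  case (Cons na rest)
  obtain n a where na: "na = (n,a)" by force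
  let ?d = "sum_list (map fst rest)"
  have dims: "dim_row (jordan_block n a) = n" "dim_col (jordan_block n a) = n"
     "dim_row (jordan_matrix rest) = ?d" "dim_col (jordan_matrix rest) = ?d" by auto
  have lt: "i < n + ?d" "j < n + ?d" using Cons.prems na by auto
  have IH: "\<And>i j. i < ?d \<Longrightarrow> j < ?d \<Longrightarrow> (j \<noteq> i \<and> j \<noteq> Suc i \<longrightarrow> jordan_matrix rest $$ (i,j) = 0) \<and>
         (j = Suc i \<longrightarrow> jordan_matrix rest $$ (i,j) = 0 \<or>
            (jordan_matrix rest $$ (i,j) = 1 \<and> jordan_matrix rest $$ (i,i) = jordan_matrix rest $$ (j,j)))"
    using Cons.IH by blast
  show ?case
  proof (cases "i < n")
    case True
    then show ?thesis using lt unfolding na jordan_matrix_Cons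
      by (auto simp: dims)
  next
    case False
    show ?thesis
    proof (cases "j < n")
      case True
      then show ?thesis using lt False unfolding na jordan_matrix_Cons by (auto simp: dims)
    next
      case jF: False
      have e: "jordan_matrix (na # rest) $$ (x, y) = jordan_matrix rest $$ (x - n, y - n)"
        if "\<not> x < n" "\<not> y < n" "x < n + ?d" "y < n + ?d" for x y
        using that unfolding na jordan_matrix_Cons by (auto simp: dims)
      have ij: "(j \<noteq> i) = (j - n \<noteq> i - n)" "(j = Suc i) = (j - n = Suc (i - n))"
        using False jF by auto
      have "i - n < ?d" "j - n < ?d" using lt False jF by auto
      note IH' = IH[OF this]
      show ?thesis unfolding ij e[OF False jF lt] e[OF False False lt(1) lt(1)] e[OF jF jF lt(2) lt(2)]
        by (rule IH')
    qed
  qed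
qed


lemma ip_herm:
  fixes M :: "nat \<Rightarrow> nat \<Rightarrow> complex"
  assumes herm: "\<And>i j. i<d \<Longrightarrow> j<d \<Longrightarrow> M i j = cnj (M j i)"
  shows "(\<Sum>r<d. (\<Sum>s<d. M r s * x s) * cnj (y r)) = (\<Sum>r<d. x r * cnj (\<Sum>s<d. M r s * y s))"
proof -
  have "(\<Sum>r<d. (\<Sum>s<d. M r s * x s) * cnj (y r)) = (\<Sum>r<d. \<Sum>s<d. M r s * x s * cnj (y r))"
    by (simp add: sum_distrib_right)
  also have "\<dots> = (\<Sum>s<d. \<Sum>r<d. M r s * x s * cnj (y r))" by (rule sum.swap)
  also have "\<dots> = (\<Sum>s<d. x s * cnj (\<Sum>r<d. M s r * y r))"
  proof (rule sum.cong[OF refl])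
    fix s assume s: "s \<in> {..<d}"
    have "cnj (\<Sum>r<d. M s r * y r) = (\<Sum>r<d. M r s * cnj (y r))"
      unfolding cnj_sum
    proof (rule sum.cong[OF refl])
      fix r assume r: "r \<in> {..<d}"
      have "M r s = cnj (M s r)" using r s by (intro herm) auto
      thus "cnj (M s r * y r) = M r s * cnj (y r)" by simp
    qed
    thus "(\<Sum>r<d. M r s * x s * cnj (y r)) = x s * cnj (\<Sum>r<d. M s r * y r)"
      by (simp add: sum_distrib_left mult_ac)
  qed
  finally show ?thesis .
qed

lemma ip_zero:
  fixes x :: "nat \<Rightarrow> complex"
  assumes "(\<Sum>r<d. x r * cnj (x r)) = 0" "k < d"
  shows "x k = 0"
proof -
  have "(\<Sum>r<d. x r * cnj (x r)) = complex_of_real (\<Sum>r<d. (cmod (x r))^2)"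
    by (simp only: complex_norm_square[symmetric] of_real_sum)
  hence "complex_of_real (\<Sum>r<d. (cmod (x r))^2) = 0" using assms(1) by simp
  hence "(\<Sum>r<d. (cmod (x r))^2) = 0" by (simp only: of_real_eq_0_iff)
  hence "(cmod (x k))^2 = 0" using assms(2) by (subst (asm) sum_nonneg_eq_0_iff) auto
  thus ?thesis by simp
qed


lemma mat_mult_entry:
  assumes "A \<in> carrier_mat d d" "B \<in> carrier_mat d d" "i < d" "j < d"
  shows "(A * B) $$ (i,j) = (\<Sum>k<d. A $$ (i,k) * B $$ (k,j))"
  using assms by (simp add: scalar_prod_def atLeast0LessThan)

lemma sum_two_support:
  fixes g :: "nat \<Rightarrow> complex"
  assumes "j < d" "\<And>k. k < d \<Longrightarrow> k \<noteq> j \<Longrightarrow> Suc k \<noteq> j \<Longrightarrow> g k = 0"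
  shows "(\<Sum>k<d. g k) = g j + (if j > 0 then g (j - 1) else 0)"
proof (cases "j > 0")
  case True
  have z: "\<forall>k\<in>{..<d} - {j, j - 1}. g k = 0"
  proof
    fix k assume "k \<in> {..<d} - {j, j - 1}"
    hence "k < d" "k \<noteq> j" "Suc k \<noteq> j" using True by auto
    thus "g k = 0" by (rule assms(2))
  qed
  have "(\<Sum>k<d. g k) = (\<Sum>k\<in>{j, j - 1}. g k)"
    using assms(1) True z by (intro sum.mono_neutral_cong_right) auto
  then show ?thesis using True by simp
next
  case False
  have "(\<Sum>k<d. g k) = (\<Sum>k\<in>{j}. g k)"
    using assms False by (intro sum.mono_neutral_cong_right) auto
  then show ?thesis using False by simp
qed

lemma herm_diag:
  fixes M :: "nat \<Rightarrow> nat \<Rightarrow> complex" and d :: nat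
  assumes herm: "\<And>i j. i<d \<Longrightarrow> j<d \<Longrightarrow> M i j = cnj (M j i)"
  shows "\<exists>P Q l. (\<forall>i<d. \<forall>j<d. (\<Sum>k<d. Q i k * P k j) = (if i = j then 1 else 0))
     \<and> (\<forall>i<d. \<forall>j<d. (\<Sum>k<d. P i k * Q k j) = (if i = j then 1 else 0))
     \<and> (\<forall>r<d. \<forall>j<d. (\<Sum>s<d. M r s * P s j) = l j * P r j)"
proof -
  define A where "A = mat d d (\<lambda>(i,j). M i j)"
  have A: "A \<in> carrier_mat d d" unfolding A_def by simp
  from char_poly_factorized[OF A] obtain as where "char_poly A = (\<Prod>a\<leftarrow>as. [:- a, 1:])" by blast
  from jordan_nf_exists[OF A this] obtain n_as where "jordan_nf A n_as" by blast
  hence "similar_mat A (jordan_matrix n_as)" unfolding jordan_nf_def by simp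
  then obtain P Q where wit: "similar_mat_wit A (jordan_matrix n_as) P Q"
    unfolding similar_mat_def by blast
  define J where "J = jordan_matrix n_as"
  have dA: "dim_row A = d" using A by simp
  have J: "J \<in> carrier_mat d d" and P: "P \<in> carrier_mat d d" and Q: "Q \<in> carrier_mat d d"
    and PQ: "P * Q = 1\<^sub>m d" and QP: "Q * P = 1\<^sub>m d" and AJ: "A = P * J * Q"
    using wit unfolding similar_mat_wit_def Let_def dA J_def by auto
  have dJ: "sum_list (map fst n_as) = d" using J jordan_matrix_dim[of n_as] unfolding J_def by auto
  have Jent: "\<And>i j. i < d \<Longrightarrow> j < d \<Longrightarrow> (j \<noteq> i \<and> j \<noteq> Suc i \<longrightarrow> J $$ (i,j) = 0) \<and>
         (j = Suc i \<longrightarrow> J $$ (i,j) = 0 \<or> (J $$ (i,j) = 1 \<and> J $$ (i,i) = J $$ (j,j)))"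
    using jordan_matrix_entries[of _ n_as] unfolding dJ J_def by blast
  have AP: "A * P = P * J"
  proof -
    have "A * P = P * J * (Q * P)" using AJ P J Q by (simp add: assoc_mult_mat[of _ d d _ d _ d])
    also have "\<dots> = P * J" using QP P J by simp
    finally show ?thesis .
  qed
  have MP: "(\<Sum>s<d. M r s * P $$ (s,j)) = (\<Sum>k<d. P $$ (r,k) * J $$ (k,j))" if "r < d" "j < d" for r j
  proof -
    have "(A * P) $$ (r,j) = (P * J) $$ (r,j)" using AP by simp
    thus ?thesis using that A P J unfolding mat_mult_entry[OF A P that] mat_mult_entry[OF P J that]
      by (simp add: A_def)
  qed
  have MP2: "(\<Sum>s<d. M r s * P $$ (s,j)) = P $$ (r,j) * J $$ (j,j)
       + (if j > 0 then P $$ (r,j-1) * J $$ (j-1,j) else 0)" if "r < d" "j < d" for r j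
    unfolding MP[OF that] using that Jent by (intro sum_two_support) auto
  have colnz: "\<exists>k<d. P $$ (k,j) \<noteq> 0" if "j < d" for j
  proof (rule ccontr)
    assume "\<not> ?thesis"
    hence "(Q * P) $$ (j,j) = 0" unfolding mat_mult_entry[OF Q P that that] by auto
    thus False using QP that by simp
  qed
  have super0: "\<forall>i. Suc i < d \<longrightarrow> J $$ (i, Suc i) = 0"
  proof (rule allI, induct_tac i rule: less_induct)
    fix i assume IH: "\<And>i'. i' < i \<Longrightarrow> Suc i' < d \<longrightarrow> J $$ (i', Suc i') = 0"
    show "Suc i < d \<longrightarrow> J $$ (i, Suc i) = 0"
    proof (intro impI, rule ccontr)
      assume i: "Suc i < d" and nz: "J $$ (i, Suc i) \<noteq> 0"
      define lam where "lam = J $$ (i,i)"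
      have J1: "J $$ (i, Suc i) = 1" and Jd: "J $$ (Suc i, Suc i) = lam"
        using Jent[of i "Suc i"] i nz unfolding lam_def by auto
      define w where "w = (\<lambda>r. P $$ (r,i))"
      define u where "u = (\<lambda>r. P $$ (r,Suc i))"
      have Mw: "(\<Sum>s<d. M r s * w s) = lam * w r" if "r < d" for r
      proof -
        have "(if i > 0 then P $$ (r,i-1) * J $$ (i-1,i) else 0) = 0"
          using IH[of "i - 1"] i by (cases i) auto
        thus ?thesis using MP2[of r i] that i unfolding w_def lam_def by simp
      qed
      have Mu: "(\<Sum>s<d. M r s * u s) = w r + lam * u r" if "r < d" for r
        using MP2[of r "Suc i"] that i J1 Jd unfolding w_def u_def by simp
      define ip where "ip = (\<lambda>x y. \<Sum>r<d. x r * cnj (y r))"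
      have ipH: "ip (\<lambda>r. \<Sum>s<d. M r s * x s) y = ip x (\<lambda>r. \<Sum>s<d. M r s * y s)" for x y
        unfolding ip_def by (rule ip_herm[OF herm])
      have wnz: "ip w w \<noteq> 0"
      proof
        assume z: "ip w w = 0"
        obtain k where k: "k < d" "P $$ (k,i) \<noteq> 0" using colnz[of i] i by auto
        have "w k = 0" using ip_zero[of w d k] z k(1) unfolding ip_def by blast
        thus False using k(2) unfolding w_def by simp
      qed
      have e1: "ip (\<lambda>r. \<Sum>s<d. M r s * w s) w = lam * ip w w"
      proof -
        have "ip (\<lambda>r. \<Sum>s<d. M r s * w s) w = (\<Sum>r<d. lam * (w r * cnj (w r)))"
          unfolding ip_def by (rule sum.cong[OF refl]) (simp add: Mw)
        thus ?thesis unfolding ip_def by (simp only: sum_distrib_left[symmetric])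
      qed
      have e2: "ip w (\<lambda>r. \<Sum>s<d. M r s * w s) = cnj lam * ip w w"
      proof -
        have "ip w (\<lambda>r. \<Sum>s<d. M r s * w s) = (\<Sum>r<d. cnj lam * (w r * cnj (w r)))"
          unfolding ip_def by (rule sum.cong[OF refl]) (simp add: Mw)
        thus ?thesis unfolding ip_def by (simp only: sum_distrib_left[symmetric])
      qed
      have "lam * ip w w = cnj lam * ip w w" using e1 e2 ipH[of w w] by metis
      hence real: "cnj lam = lam" using wnz by simp
      have e3: "ip (\<lambda>r. \<Sum>s<d. M r s * u s) w = ip w w + lam * ip u w"
      proof -
        have "ip (\<lambda>r. \<Sum>s<d. M r s * u s) w = (\<Sum>r<d. w r * cnj (w r) + lam * (u r * cnj (w r)))"
          unfolding ip_def by (rule sum.cong[OF refl]) (simp add: Mu distrib_right)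
        thus ?thesis unfolding ip_def by (simp only: sum.distrib sum_distrib_left[symmetric])
      qed
      have e4: "ip u (\<lambda>r. \<Sum>s<d. M r s * w s) = cnj lam * ip u w"
      proof -
        have "ip u (\<lambda>r. \<Sum>s<d. M r s * w s) = (\<Sum>r<d. cnj lam * (u r * cnj (w r)))"
          unfolding ip_def by (rule sum.cong[OF refl]) (simp add: Mw)
        thus ?thesis unfolding ip_def by (simp only: sum_distrib_left[symmetric])
      qed
      have "ip w w + lam * ip u w = lam * ip u w" using e3 e4 ipH[of u w] real by metis
      hence "ip w w = 0" by simp
      thus False using wnz by simp
    qed
  qed
  have eig: "(\<Sum>s<d. M r s * P $$ (s,j)) = J $$ (j,j) * P $$ (r,j)" if "r < d" "j < d" for r j
  proof -
    have "(if j > 0 then P $$ (r,j-1) * J $$ (j-1,j) else 0) = 0"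
      using super0 that by (cases j) auto
    thus ?thesis using MP2[OF that] by simp
  qed
  show ?thesis
    apply (rule exI[of _ "\<lambda>i j. P $$ (i,j)"], rule exI[of _ "\<lambda>i j. Q $$ (i,j)"],
           rule exI[of _ "\<lambda>j. J $$ (j,j)"])
    using eig mat_mult_entry[OF Q P] mat_mult_entry[OF P Q] QP PQ by auto
qed


lemma length_ins_at[simp]: "i \<le> length xs \<Longrightarrow> length (ins_at i k xs) = Suc (length xs)"
  unfolding ins_at_def by simp
lemma set_ins_at: "i \<le> length xs \<Longrightarrow> set (ins_at i k xs) = insert k (set xs)"
proof -
  have "set xs = set (take i xs) \<union> set (drop i xs)" by (metis append_take_drop_id set_append)
  thus ?thesis unfolding ins_at_def by auto
qed
lemma nth_ins_at[simp]: "i \<le> length xs \<Longrightarrow> ins_at i k xs ! i = k"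
  unfolding ins_at_def by (simp add: nth_append)
lemma del_ins_at[simp]: "i \<le> length xs \<Longrightarrow> del_at i (ins_at i k xs) = xs"
  unfolding ins_at_def del_at_def by simp
lemma ins_del_at[simp]: "i < length xs \<Longrightarrow> ins_at i (xs ! i) (del_at i xs) = xs"
  unfolding ins_at_def del_at_def by (simp add: id_take_nth_drop[symmetric])
lemma length_del_at[simp]: "i < length xs \<Longrightarrow> length (del_at i xs) = length xs - 1"
  unfolding del_at_def by simp
lemma set_del_at: "set (del_at i xs) \<subseteq> set xs"
  unfolding del_at_def by (auto dest: in_set_takeD in_set_dropD)


definition Dset :: "nat \<Rightarrow> nat \<Rightarrow> nat \<Rightarrow> (nat list \<times> nat list) set" where
  "Dset N m n = {(I,J). valid_idx N m n I J}"

definition ip :: "nat \<Rightarrow> nat \<Rightarrow> nat \<Rightarrow> tensor \<Rightarrow> tensor \<Rightarrow> complex" where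
  "ip N m n S T = (\<Sum>(I,J)\<in>Dset N m n. S I J * cnj (T I J))"

lemma finite_Dset[simp]: "finite (Dset N m n)"
proof -
  have "Dset N m n \<subseteq> {I. set I \<subseteq> {..<N} \<and> length I = m} \<times> {J. set J \<subseteq> {..<N} \<and> length J = n}"
    unfolding Dset_def valid_idx_def by auto
  thus ?thesis by (rule finite_subset) (intro finite_cartesian_product finite_lists_length_eq; simp)
qed

lemma tr_tens: "tr N m n a b T \<in> tens N (m-1) (n-1)"
  unfolding tens_def tr_def by auto

lemma trp_tens: "trp N m n a b S \<in> tens N m n"
  unfolding tens_def trp_def by auto

lemma opA_tens: "opA N m n T \<in> tens N m n"
  unfolding tens_def opA_def tau_def using trp_tens[unfolded tens_def] by auto

lemma trp_adj:
  assumes "1 \<le> a" "a \<le> m" "1 \<le> b" "b \<le> n"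
  shows "ip N m n (trp N m n a b S) T = ip N (m-1) (n-1) S (tr N m n a b T)"
proof -
  let ?D = "Dset N m n" and ?D' = "Dset N (m-1) (n-1)"
  let ?P = "\<lambda>(I::nat list, J::nat list). I ! (a-1) = J ! (b-1)"
  define g where "g = (\<lambda>((I::nat list, J::nat list), k::nat). S I J * cnj (T (ins_at (a-1) k I) (ins_at (b-1) k J)))"
  have "ip N (m-1) (n-1) S (tr N m n a b T)
      = (\<Sum>(I,J)\<in>?D'. \<Sum>k<N. S I J * cnj (T (ins_at (a-1) k I) (ins_at (b-1) k J)))"
    unfolding ip_def tr_def by (intro sum.cong refl) (auto simp: Dset_def sum_distrib_left)
  also have "\<dots> = (\<Sum>q\<in>?D' \<times> {..<N}. g q)"
    unfolding g_def by (subst sum.cartesian_product[symmetric]) (simp add: case_prod_beta)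
  also have "\<dots> = (\<Sum>(I,J)\<in>{p\<in>?D. ?P p}. S (del_at (a-1) I) (del_at (b-1) J) * cnj (T I J))"
  proof (rule sum.reindex_bij_witness[where i = "\<lambda>(I,J). ((del_at (a-1) I, del_at (b-1) J), I ! (a-1))"
        and j = "\<lambda>((I,J),k). (ins_at (a-1) k I, ins_at (b-1) k J)"])
    fix q assume q: "q \<in> ?D' \<times> {..<N}"
    then obtain I J k where qd: "q = ((I,J),k)" and v: "valid_idx N (m-1) (n-1) I J" and k: "k < N"
      by (auto simp: Dset_def)
    have l: "a - 1 \<le> length I" "b - 1 \<le> length J" using v assms unfolding valid_idx_def by auto
    show "(case case q of (x, xa) \<Rightarrow> (case x of (I, J) \<Rightarrow> \<lambda>k. (ins_at (a - 1) k I, ins_at (b - 1) k J)) xa of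
          (I, J) \<Rightarrow> ((del_at (a - 1) I, del_at (b - 1) J), I ! (a - 1))) = q"
      using l qd by simp
    show "(case q of (x, xa) \<Rightarrow> (case x of (I, J) \<Rightarrow> \<lambda>k. (ins_at (a - 1) k I, ins_at (b - 1) k J)) xa)
          \<in> {p \<in> ?D. ?P p}"
      using l qd v k assms by (auto simp: Dset_def valid_idx_def set_ins_at)
    show "(case case q of (x, xa) \<Rightarrow> (case x of (I, J) \<Rightarrow> \<lambda>k. (ins_at (a - 1) k I, ins_at (b - 1) k J)) xa of
          (I, J) \<Rightarrow> S (del_at (a - 1) I) (del_at (b - 1) J) * cnj (T I J)) = g q"
      using l qd unfolding g_def by simp
  next
    fix p assume p: "p \<in> {p\<in>?D. ?P p}"
    then obtain I J where pd: "p = (I,J)" and v: "valid_idx N m n I J" and e: "I ! (a-1) = J ! (b-1)"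
      by (auto simp: Dset_def)
    have l: "a - 1 < length I" "b - 1 < length J" using v assms unfolding valid_idx_def by auto
    show "(case case p of (I, J) \<Rightarrow> ((del_at (a - 1) I, del_at (b - 1) J), I ! (a - 1)) of
          (x, xa) \<Rightarrow> (case x of (I, J) \<Rightarrow> \<lambda>k. (ins_at (a - 1) k I, ins_at (b - 1) k J)) xa) = p"
      using l pd e ins_del_at[of "a-1" I] ins_del_at[of "b-1" J] by simp
    have "I ! (a-1) \<in> set I" using l by simp
    hence "I ! (a-1) < N" using v unfolding valid_idx_def by auto
    thus "(case p of (I, J) \<Rightarrow> ((del_at (a - 1) I, del_at (b - 1) J), I ! (a - 1))) \<in> ?D' \<times> {..<N}"
      using l pd v set_del_at[of "a-1" I] set_del_at[of "b-1" J] unfolding Dset_def valid_idx_def by auto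
  qed
  also have "\<dots> = ip N m n (trp N m n a b S) T"
    unfolding ip_def trp_def
    by (subst sum.inter_filter, simp, rule sum.cong) (auto simp: Dset_def)
  finally show ?thesis by simp
qed


lemma tr_lin: "tr N m n a b (\<lambda>I J. \<Sum>x\<in>F. c x * f x I J) = (\<lambda>I J. \<Sum>x\<in>F. c x * tr N m n a b (f x) I J)"
  unfolding tr_def by (auto intro!: ext simp: sum_distrib_left intro: sum.swap)

lemma trp_lin: "trp N m n a b (\<lambda>I J. \<Sum>x\<in>F. c x * f x I J) = (\<lambda>I J. \<Sum>x\<in>F. c x * trp N m n a b (f x) I J)"
  unfolding trp_def by (auto intro!: ext)

lemma opA_lin: "opA N m n (\<lambda>I J. \<Sum>x\<in>F. c x * f x I J) = (\<lambda>I J. \<Sum>x\<in>F. c x * opA N m n (f x) I J)"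
proof (intro ext)
  fix I J
  have "opA N m n (\<lambda>I J. \<Sum>x\<in>F. c x * f x I J) I J
      = (\<Sum>a\<in>{1..m}. \<Sum>b\<in>{1..n}. \<Sum>x\<in>F. c x * tau N m n a b (f x) I J)"
    unfolding opA_def tau_def comp_def tr_lin trp_lin by simp
  also have "\<dots> = (\<Sum>x\<in>F. \<Sum>a\<in>{1..m}. \<Sum>b\<in>{1..n}. c x * tau N m n a b (f x) I J)"
    by (simp add: sum.swap[of _ F] sum.swap[of _ "{1..n}"])
  also have "\<dots> = (\<Sum>x\<in>F. c x * opA N m n (f x) I J)"
    unfolding opA_def by (simp add: sum_distrib_left)
  finally show "opA N m n (\<lambda>I J. \<Sum>x\<in>F. c x * f x I J) I J = (\<Sum>x\<in>F. c x * opA N m n (f x) I J)" .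
qed

lemma ip_sum_left: "ip N m n (\<lambda>I J. \<Sum>x\<in>F. f x I J) T = (\<Sum>x\<in>F. ip N m n (f x) T)"
  unfolding ip_def by (simp add: sum_distrib_right case_prod_beta sum.swap[of _ F])

lemma ip_cnj: "ip N m n S T = cnj (ip N m n T S)"
  unfolding ip_def by (simp add: case_prod_beta mult.commute)

lemma ip_self: "ip N m n S S = complex_of_real (\<Sum>(I,J)\<in>Dset N m n. (cmod (S I J))^2)"
  unfolding ip_def of_real_sum by (intro sum.cong refl) (auto simp del: of_real_power simp: complex_norm_square split: prod.splits)

lemma nrm_nonneg: "(\<Sum>(I,J)\<in>Dset N m n. (cmod (S I J))^2) \<ge> 0"
  by (intro sum_nonneg) auto

lemma nrm_zero:
  assumes "S \<in> tens N m n" "(\<Sum>(I,J)\<in>Dset N m n. (cmod (S I J))^2) = 0"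
  shows "S = (\<lambda>I J. 0)"
proof (intro ext)
  fix I J
  show "S I J = 0"
  proof (cases "valid_idx N m n I J")
    case True
    hence "(I,J) \<in> Dset N m n" by (simp add: Dset_def)
    moreover have "\<forall>x\<in>Dset N m n. (\<lambda>(I,J). (cmod (S I J))^2) x = 0"
      by (rule sum_nonneg_eq_0_iff[THEN iffD1, OF finite_Dset _ assms(2)]) (auto split: prod.splits)
    ultimately have "(\<lambda>(I,J). (cmod (S I J))^2) (I,J) = 0" by blast
    thus ?thesis by simp
  next
    case False
    thus ?thesis using assms(1) unfolding tens_def by auto
  qed
qed

lemma ip_opA:
  assumes "m \<ge> 1" "n \<ge> 1"
  shows "ip N m n (opA N m n S) T = (\<Sum>a\<in>{1..m}. \<Sum>b\<in>{1..n}. ip N (m-1) (n-1) (tr N m n a b S) (tr N m n a b T))"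
proof -
  have "ip N m n (opA N m n S) T = (\<Sum>a\<in>{1..m}. \<Sum>b\<in>{1..n}. ip N m n (tau N m n a b S) T)"
    unfolding opA_def by (simp add: ip_sum_left)
  also have "\<dots> = (\<Sum>a\<in>{1..m}. \<Sum>b\<in>{1..n}. ip N (m-1) (n-1) (tr N m n a b S) (tr N m n a b T))"
    unfolding tau_def comp_def by (intro sum.cong refl) (auto simp: trp_adj)
  finally show ?thesis .
qed

definition nrm :: "nat \<Rightarrow> nat \<Rightarrow> nat \<Rightarrow> tensor \<Rightarrow> real" where
  "nrm N m n S = (\<Sum>(I,J)\<in>Dset N m n. (cmod (S I J))^2)"

lemma ip_opA_self:
  assumes "m \<ge> 1" "n \<ge> 1"
  shows "ip N m n (opA N m n T) T = complex_of_real (\<Sum>a\<in>{1..m}. \<Sum>b\<in>{1..n}. nrm N (m-1) (n-1) (tr N m n a b T))"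
  unfolding ip_opA[OF assms] ip_self nrm_def by simp

lemma opA_kernel:
  assumes "m \<ge> 1" "n \<ge> 1" "T \<in> tens N m n"
  shows "opA N m n T = (\<lambda>I J. 0) \<longleftrightarrow> T \<in> V0 N m n"
proof
  assume z: "opA N m n T = (\<lambda>I J. 0)"
  have "ip N m n (opA N m n T) T = 0" unfolding z ip_def by simp
  hence s: "(\<Sum>a\<in>{1..m}. \<Sum>b\<in>{1..n}. nrm N (m-1) (n-1) (tr N m n a b T)) = 0"
    unfolding ip_opA_self[OF assms(1,2)] by (simp only: of_real_eq_0_iff)
  have nn: "\<And>a b. nrm N (m-1) (n-1) (tr N m n a b T) \<ge> 0" unfolding nrm_def by (rule nrm_nonneg)
  have "\<forall>a\<in>{1..m}. \<forall>b\<in>{1..n}. tr N m n a b T = (\<lambda>I J. 0)"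
  proof (intro ballI)
    fix a b assume a: "a \<in> {1..m}" and b: "b \<in> {1..n}"
    have "(\<Sum>b\<in>{1..n}. nrm N (m-1) (n-1) (tr N m n a b T)) = 0"
      using s a nn sum_nonneg_eq_0_iff[of "{1..m}" "\<lambda>a. \<Sum>b\<in>{1..n}. nrm N (m-1) (n-1) (tr N m n a b T)"]
      by (simp add: sum_nonneg)
    hence "nrm N (m-1) (n-1) (tr N m n a b T) = 0"
      using b nn sum_nonneg_eq_0_iff[of "{1..n}" "\<lambda>b. nrm N (m-1) (n-1) (tr N m n a b T)"] by simp
    thus "tr N m n a b T = (\<lambda>I J. 0)" using nrm_zero[OF tr_tens] unfolding nrm_def by blast
  qed
  thus "T \<in> V0 N m n" using assms(3) unfolding V0_def by simp
next
  assume "T \<in> V0 N m n"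
  hence "\<forall>a\<in>{1..m}. \<forall>b\<in>{1..n}. tr N m n a b T = (\<lambda>I J. 0)" unfolding V0_def by simp
  thus "opA N m n T = (\<lambda>I J. 0)"
    unfolding opA_def tau_def by (auto intro!: ext sum.neutral simp: trp_def)
qed

lemma V0_V1_int:
  assumes "m \<ge> 1" "n \<ge> 1"
  shows "V0 N m n \<inter> V1 N m n = {\<lambda>I J. 0}"
proof
  show "V0 N m n \<inter> V1 N m n \<subseteq> {\<lambda>I J. 0}"
  proof
    fix T assume T: "T \<in> V0 N m n \<inter> V1 N m n"
    then obtain S where S: "T = (\<lambda>I J. \<Sum>a\<in>{1..m}. \<Sum>b\<in>{1..n}. trp N m n a b (S a b) I J)"
      unfolding V1_def by blast
    have tr0: "\<forall>a\<in>{1..m}. \<forall>b\<in>{1..n}. tr N m n a b T = (\<lambda>I J. 0)" using T unfolding V0_def by simp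
    have "ip N m n T T = (\<Sum>a\<in>{1..m}. \<Sum>b\<in>{1..n}. ip N m n (trp N m n a b (S a b)) T)"
      by (subst (1) S) (simp add: ip_sum_left)
    also have "\<dots> = (\<Sum>a\<in>{1..m}. \<Sum>b\<in>{1..n}. ip N (m-1) (n-1) (S a b) (tr N m n a b T))"
      by (intro sum.cong refl) (auto simp: trp_adj)
    also have "\<dots> = 0" using tr0 by (auto intro!: sum.neutral simp: ip_def)
    finally have "nrm N m n T = 0" unfolding ip_self nrm_def by (simp only: of_real_eq_0_iff)
    hence "T = (\<lambda>I J. 0)" using nrm_zero[of T] T unfolding V0_def nrm_def by blast
    thus "T \<in> {\<lambda>I J. 0}" by simp
  qed
next
  have "(\<lambda>I J. 0) \<in> V0 N m n" unfolding V0_def tens_def tr_def by (auto intro!: ext)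
  moreover have "(\<lambda>I J. 0::complex) \<in> V1 N m n" unfolding V1_def
    by (rule CollectI, rule exI[of _ "\<lambda>a b I J. 0"]) (auto simp: tens_def trp_def)
  ultimately show "{\<lambda>I J. 0} \<subseteq> V0 N m n \<inter> V1 N m n" by simp
qed


lemma tens_comb: "(\<And>x. x \<in> F \<Longrightarrow> f x \<in> tens N m n) \<Longrightarrow> (\<lambda>I J. \<Sum>x\<in>F. c x * f x I J) \<in> tens N m n"
  unfolding tens_def by auto

lemma diag_exists:
  assumes m: "m \<ge> 1" and n: "n \<ge> 1"
  shows "diagonalisable_on (tens N m n) (opA N m n)"
proof -
  obtain L where L: "set L = Dset N m n" and dL: "distinct L"
    using finite_distinct_list[OF finite_Dset] by blast
  define d where "d = length L"
  define E where "E = (\<lambda>i. (\<lambda>I J. if (I,J) = L ! i then 1 else 0) :: tensor)"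
  define M where "M = (\<lambda>r j. opA N m n (E j) (fst (L!r)) (snd (L!r)))"
  have Ld: "L ! i \<in> Dset N m n" if "i < d" for i
  proof -
    have "L ! i \<in> set L" using that unfolding d_def by simp
    thus ?thesis using L by simp
  qed
  have Eval: "E i (fst (L!r)) (snd (L!r)) = (if r = i then 1 else 0)" if "i < d" "r < d" for i r
    using that dL nth_eq_iff_index_eq[OF dL, of r i] unfolding E_def d_def by auto
  have Etens: "E i \<in> tens N m n" if "i < d" for i
    using Ld[OF that] unfolding E_def tens_def Dset_def by auto
  have ipE: "ip N m n X (E i) = X (fst (L!i)) (snd (L!i))" if "i < d" for X i
  proof -
    have "ip N m n X (E i) = (\<Sum>p\<in>Dset N m n. if p = L ! i then X (fst (L!i)) (snd (L!i)) else 0)"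
      unfolding ip_def E_def by (intro sum.cong refl) (auto simp: case_prod_beta)
    also have "\<dots> = X (fst (L!i)) (snd (L!i))" using Ld[OF that] by simp
    finally show ?thesis .
  qed
  have herm: "M r j = cnj (M j r)" if "r < d" "j < d" for r j
  proof -
    have "M r j = ip N m n (opA N m n (E j)) (E r)" unfolding M_def ipE[OF that(1)] ..
    also have "\<dots> = (\<Sum>a\<in>{1..m}. \<Sum>b\<in>{1..n}. ip N (m-1) (n-1) (tr N m n a b (E j)) (tr N m n a b (E r)))"
      by (rule ip_opA[OF m n])
    also have "\<dots> = cnj (\<Sum>a\<in>{1..m}. \<Sum>b\<in>{1..n}. ip N (m-1) (n-1) (tr N m n a b (E r)) (tr N m n a b (E j)))"
      unfolding cnj_sum by (intro sum.cong refl) (rule ip_cnj)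
    also have "\<dots> = cnj (ip N m n (opA N m n (E r)) (E j))" by (simp add: ip_opA[OF m n])
    also have "\<dots> = cnj (M j r)" unfolding M_def ipE[OF that(2)] ..
    finally show ?thesis .
  qed
  obtain P Q l where QP: "\<forall>i<d. \<forall>j<d. (\<Sum>k<d. Q i k * P k j) = (if i = j then 1 else 0)"
    and PQ: "\<forall>i<d. \<forall>j<d. (\<Sum>k<d. P i k * Q k j) = (if i = j then 1 else 0)"
    and eig: "\<forall>r<d. \<forall>j<d. (\<Sum>s<d. M r s * P s j) = l j * P r j"
    using herm_diag[of d M] herm by blast
  have tens_eq: "X = Y" if "X \<in> tens N m n" "Y \<in> tens N m n"
    "\<And>r. r < d \<Longrightarrow> X (fst (L!r)) (snd (L!r)) = Y (fst (L!r)) (snd (L!r))" for X Y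
  proof (intro ext)
    fix I J
    show "X I J = Y I J"
    proof (cases "valid_idx N m n I J")
      case True
      hence "(I,J) \<in> set L" using L by (simp add: Dset_def)
      then obtain r where "r < d" "L ! r = (I,J)" unfolding d_def in_set_conv_nth by blast
      thus ?thesis using that(3)[of r] by simp
    next
      case False
      thus ?thesis using that(1,2) unfolding tens_def by simp
    qed
  qed
  have combval: "(\<Sum>i<d. c i * E i (fst (L!r)) (snd (L!r))) = c r" if "r < d" for c r
  proof -
    have "(\<Sum>i<d. c i * E i (fst (L!r)) (snd (L!r))) = (\<Sum>i<d. if i = r then c r else 0)"
      using that by (intro sum.cong refl) (auto simp: Eval)
    thus ?thesis using that by simp
  qed
  define v where "v = (\<lambda>k. (\<lambda>I J. \<Sum>i<d. P i k * E i I J) :: tensor)"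
  have vtens: "v k \<in> tens N m n" for k unfolding v_def by (rule tens_comb) (simp add: Etens)
  have vval: "v k (fst (L!r)) (snd (L!r)) = P r k" if "r < d" for k r
    unfolding v_def using combval[OF that] .
  have veig: "opA N m n (v k) = (\<lambda>I J. l k * v k I J)" if "k < d" for k
  proof (rule tens_eq)
    show "opA N m n (v k) \<in> tens N m n" by (rule opA_tens)
    show "(\<lambda>I J. l k * v k I J) \<in> tens N m n" using vtens[of k] unfolding tens_def by simp
    fix r assume r: "r < d"
    have "opA N m n (v k) (fst (L!r)) (snd (L!r)) = (\<Sum>i<d. P i k * M r i)"
      unfolding v_def opA_lin M_def ..
    also have "\<dots> = l k * P r k" using eig r that by (simp add: mult.commute)
    finally show "opA N m n (v k) (fst (L!r)) (snd (L!r)) = l k * v k (fst (L!r)) (snd (L!r))"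
      using vval[OF r] by simp
  qed
  have vnz: "v k \<noteq> (\<lambda>I J. 0)" if "k < d" for k
  proof
    assume z: "v k = (\<lambda>I J. 0)"
    have "\<forall>j<d. P j k = 0"
    proof (intro allI impI)
      fix j assume "j < d"
      hence "P j k = v k (fst (L!j)) (snd (L!j))" using vval by simp
      thus "P j k = 0" using z by simp
    qed
    hence "(\<Sum>j<d. Q k j * P j k) = 0" by simp
    thus False using QP that by simp
  qed
  have span: "\<exists>c. T = (\<lambda>I J. \<Sum>k<d. c k * v k I J)" if T: "T \<in> tens N m n" for T
  proof (intro exI tens_eq)
    let ?c = "\<lambda>k. \<Sum>j<d. Q k j * T (fst (L!j)) (snd (L!j))"
    show "T \<in> tens N m n" by fact
    show "(\<lambda>I J. \<Sum>k<d. ?c k * v k I J) \<in> tens N m n" by (rule tens_comb) (rule vtens)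
    fix r assume r: "r < d"
    have "(\<Sum>k<d. ?c k * v k (fst (L!r)) (snd (L!r))) = (\<Sum>k<d. \<Sum>j<d. P r k * Q k j * T (fst (L!j)) (snd (L!j)))"
      using r by (simp add: vval sum_distrib_left sum_distrib_right mult_ac)
    also have "\<dots> = (\<Sum>j<d. (\<Sum>k<d. P r k * Q k j) * T (fst (L!j)) (snd (L!j)))"
      by (subst sum.swap) (simp add: sum_distrib_right)
    also have "\<dots> = (\<Sum>j<d. if j = r then T (fst (L!r)) (snd (L!r)) else 0)"
      using PQ r by (intro sum.cong refl) auto
    also have "\<dots> = T (fst (L!r)) (snd (L!r))" using r by simp
    finally show "T (fst (L!r)) (snd (L!r)) = (\<Sum>k<d. ?c k * v k (fst (L!r)) (snd (L!r)))" by simp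
  qed
  show ?thesis unfolding diagonalisable_on_def
    by (rule exI[of _ d], rule exI[of _ v], rule exI[of _ l]) (use vtens vnz veig span in blast)
qed


lemma V1_tens: "T \<in> V1 N m n \<Longrightarrow> T \<in> tens N m n"
  unfolding V1_def tens_def trp_def by auto

lemma trp_diff: "trp N m n a b (\<lambda>I J. A I J - B I J) = (\<lambda>I J. trp N m n a b A I J - trp N m n a b B I J)"
  unfolding trp_def by (auto intro!: ext)

lemma decomp:
  assumes m: "m \<ge> 1" and n: "n \<ge> 1" and T: "T \<in> tens N m n"
  shows "\<exists>T0 X. T0 \<in> V0 N m n \<and> X \<in> tens N m n \<and> T = (\<lambda>I J. T0 I J + opA N m n X I J)"
proof -
  obtain K v l where vk: "\<forall>k<K. v k \<in> tens N m n \<and> v k \<noteq> (\<lambda>I J. 0) \<and> opA N m n (v k) = (\<lambda>I J. l k * v k I J)"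
    and sp: "\<forall>T\<in>tens N m n. \<exists>c :: nat \<Rightarrow> complex. T = (\<lambda>I J. \<Sum>k<K. c k * v k I J)"
    using diag_exists[OF m n] unfolding diagonalisable_on_def by blast
  obtain c where c: "T = (\<lambda>I J. \<Sum>k<K. c k * v k I J)" using sp T by blast
  define T0 where "T0 = (\<lambda>I J. \<Sum>k<K. (if l k = 0 then c k else 0) * v k I J)"
  define X where "X = (\<lambda>I J. \<Sum>k<K. (if l k = 0 then 0 else c k / l k) * v k I J)"
  have vt: "\<And>k. k \<in> {..<K} \<Longrightarrow> v k \<in> tens N m n" using vk by auto
  have T0t: "T0 \<in> tens N m n" unfolding T0_def by (rule tens_comb[OF vt])
  have Xt: "X \<in> tens N m n" unfolding X_def by (rule tens_comb[OF vt])
  have "opA N m n T0 = (\<lambda>I J. \<Sum>k<K. (if l k = 0 then c k else 0) * opA N m n (v k) I J)"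
    unfolding T0_def by (rule opA_lin)
  also have "\<dots> = (\<lambda>I J. 0)"
  proof (intro ext sum.neutral ballI)
    fix I J k assume "k \<in> {..<K}"
    thus "(if l k = 0 then c k else 0) * opA N m n (v k) I J = 0" using vk by auto
  qed
  finally have "T0 \<in> V0 N m n" using opA_kernel[OF m n T0t] by simp
  moreover have "opA N m n X = (\<lambda>I J. \<Sum>k<K. (if l k = 0 then 0 else c k) * v k I J)"
  proof -
    have "opA N m n X = (\<lambda>I J. \<Sum>k<K. (if l k = 0 then 0 else c k / l k) * opA N m n (v k) I J)"
      unfolding X_def by (rule opA_lin)
    also have "\<dots> = (\<lambda>I J. \<Sum>k<K. (if l k = 0 then 0 else c k) * v k I J)"
    proof (intro ext sum.cong refl)
      fix I J k assume "k \<in> {..<K}"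
      thus "(if l k = 0 then 0 else c k / l k) * opA N m n (v k) I J = (if l k = 0 then 0 else c k) * v k I J"
        using vk by auto
    qed
    finally show ?thesis .
  qed
  moreover have "T = (\<lambda>I J. T0 I J + opA N m n X I J)"
    unfolding calculation(2) T0_def c by (auto intro!: ext simp: sum.distrib[symmetric] distrib_right[symmetric]
      intro!: sum.cong)
  ultimately show ?thesis using Xt by blast
qed

lemma opA_V1: "opA N m n T \<in> V1 N m n"
  unfolding V1_def opA_def tau_def comp_def
  by (rule CollectI, rule exI[of _ "\<lambda>a b. tr N m n a b T"]) (simp add: tr_tens[simplified])

lemma im_V1:
  assumes m: "m \<ge> 1" and n: "n \<ge> 1"
  shows "opA N m n ` tens N m n = V1 N m n"
proof
  show "opA N m n ` tens N m n \<subseteq> V1 N m n" using opA_V1 by blast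
next
  show "V1 N m n \<subseteq> opA N m n ` tens N m n"
  proof
    fix T assume T: "T \<in> V1 N m n"
    then obtain S where S: "\<forall>a\<in>{1..m}. \<forall>b\<in>{1..n}. S a b \<in> tens N (m - 1) (n - 1)"
      and TS: "T = (\<lambda>I J. \<Sum>a\<in>{1..m}. \<Sum>b\<in>{1..n}. trp N m n a b (S a b) I J)"
      unfolding V1_def by blast
    obtain T0 X where T0: "T0 \<in> V0 N m n" and X: "X \<in> tens N m n"
      and dec: "T = (\<lambda>I J. T0 I J + opA N m n X I J)"
      using decomp[OF m n V1_tens[OF T]] by blast
    define S' where "S' = (\<lambda>a b I J. S a b I J - tr N m n a b X I J)"
    have "T0 = (\<lambda>I J. T I J - opA N m n X I J)" using dec by (auto intro!: ext)
    also have "\<dots> = (\<lambda>I J. \<Sum>a\<in>{1..m}. \<Sum>b\<in>{1..n}. trp N m n a b (S' a b) I J)"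
      unfolding S'_def trp_diff TS opA_def tau_def comp_def
      by (auto intro!: ext simp: sum_subtractf)
    finally have T0e: "T0 = (\<lambda>I J. \<Sum>a\<in>{1..m}. \<Sum>b\<in>{1..n}. trp N m n a b (S' a b) I J)" .
    have S't: "\<forall>a\<in>{1..m}. \<forall>b\<in>{1..n}. S' a b \<in> tens N (m-1) (n-1)"
      using S tr_tens[of N m n _ _ X] unfolding S'_def tens_def by auto
    have "T0 \<in> V1 N m n" unfolding V1_def using T0e S't by blast
    hence "T0 = (\<lambda>I J. 0)" using V0_V1_int[OF m n] T0 by blast
    hence "T = opA N m n X" using dec by simp
    thus "T \<in> opA N m n ` tens N m n" using X by blast
  qed
qed

lemma eig_real:
  assumes m: "m \<ge> 1" and n: "n \<ge> 1" and T: "T \<in> tens N m n" and nz: "T \<noteq> (\<lambda>I J. 0)"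
    and e: "opA N m n T = (\<lambda>I J. \<mu> * T I J)"
  shows "\<mu> \<in> \<real> \<and> Re \<mu> \<ge> 0"
proof -
  define R where "R = (\<Sum>a\<in>{1..m}. \<Sum>b\<in>{1..n}. nrm N (m-1) (n-1) (tr N m n a b T))"
  define r where "r = nrm N m n T"
  have R0: "R \<ge> 0" unfolding R_def nrm_def by (intro sum_nonneg nrm_nonneg)
  have r0: "r \<ge> 0" unfolding r_def nrm_def by (rule nrm_nonneg)
  have "r \<noteq> 0" using nrm_zero[OF T] nz unfolding r_def nrm_def by blast
  hence rp: "r > 0" using r0 by simp
  have "complex_of_real R = ip N m n (opA N m n T) T" unfolding R_def by (simp add: ip_opA_self[OF m n])
  also have "\<dots> = \<mu> * ip N m n T T" unfolding e ip_def by (simp add: sum_distrib_left mult.assoc case_prod_beta)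
  also have "\<dots> = \<mu> * complex_of_real r" unfolding ip_self r_def nrm_def ..
  finally have "\<mu> = complex_of_real (R / r)" using rp by (simp add: field_simps)
  thus ?thesis using R0 rp by simp
qed


theorem lemma2p1:
  fixes N m n :: nat
  assumes "m \<ge> 1" and "n \<ge> 1" and "N \<ge> 1"
  shows "(\<forall>T\<in>tens N m n. opA N m n T \<in> tens N m n)
    \<and> diagonalisable_on (tens N m n) (opA N m n)
    \<and> {T \<in> tens N m n. opA N m n T = (\<lambda>I J. 0)} = V0 N m n
    \<and> opA N m n ` tens N m n = V1 N m n
    \<and> V0 N m n \<inter> V1 N m n = {\<lambda>I J. 0}
    \<and> {(\<lambda>I J. S I J + T I J) | S T. S \<in> V0 N m n \<and> T \<in> V1 N m n} = tens N m n
    \<and> (\<forall>\<mu> T. T \<in> tens N m n \<and> T \<noteq> (\<lambda>I J. 0) \<and> opA N m n T = (\<lambda>I J. \<mu> * T I J)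
          \<longrightarrow> \<mu> \<in> \<real> \<and> Re \<mu> \<ge> 0)"
proof -
  note m = assms(1) and n = assms(2)
  have V0t: "\<And>T. T \<in> V0 N m n \<Longrightarrow> T \<in> tens N m n" unfolding V0_def by simp
  have ker: "{T \<in> tens N m n. opA N m n T = (\<lambda>I J. 0)} = V0 N m n"
    using opA_kernel[OF m n] V0t by blast
  have sums: "{(\<lambda>I J. S I J + T I J) | S T. S \<in> V0 N m n \<and> T \<in> V1 N m n} = tens N m n"
  proof
    show "{(\<lambda>I J. S I J + T I J) | S T. S \<in> V0 N m n \<and> T \<in> V1 N m n} \<subseteq> tens N m n"
    proof
      fix U assume "U \<in> {(\<lambda>I J. S I J + T I J) | S T. S \<in> V0 N m n \<and> T \<in> V1 N m n}"
      then obtain S T where "S \<in> V0 N m n" "T \<in> V1 N m n" "U = (\<lambda>I J. S I J + T I J)" by blast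
      moreover have "S \<in> tens N m n" "T \<in> tens N m n" using calculation V0t V1_tens by auto
      ultimately show "U \<in> tens N m n" unfolding tens_def by simp
    qed
  next
    show "tens N m n \<subseteq> {(\<lambda>I J. S I J + T I J) | S T. S \<in> V0 N m n \<and> T \<in> V1 N m n}"
    proof
      fix U assume "U \<in> tens N m n"
      then obtain T0 X where "T0 \<in> V0 N m n" "U = (\<lambda>I J. T0 I J + opA N m n X I J)"
        using decomp[OF m n] by blast
      thus "U \<in> {(\<lambda>I J. S I J + T I J) | S T. S \<in> V0 N m n \<and> T \<in> V1 N m n}"
        using opA_V1 by blast
    qed
  qed
  show ?thesis
    using opA_tens diag_exists[OF m n] ker im_V1[OF m n] V0_V1_int[OF m n] sums eig_real[OF m n]
    by blast
qed

end
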